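(* Let $X$ be a locally compact metrizable space, $\Lambda\subset\mathbb{R}$ a compact interval and $\{F_\lambda\}_{\lambda\in\Lambda}$ a parameterized family of discrete multivalued dynamical systems on $X$. Assume $N$ is an isolating neighborhood with respect to $F_\mu$ for some $\mu\in\Lambda$, and $P,Q,R$ are weak index pairs in $N$ with respect to $F_\mu$ with $P\subset\operatorname{int}_NQ$ and $Q\subset\operatorname{int}_NR$ (componentwise). Then there exists a neighborhood $\Lambda_0$ of $\mu$ in $\Lambda$ such that for every $\lambda\in\Lambda_0$ there is a weak index pair $P(\lambda)$ in $N$ with respect to $F_\lambda$ satisfying $P\subset P(\lambda)\subset R$ (componentwise).
   Context: A discrete multivalued dynamical system (dmds) on $X$ is a usc map $F:X\times\mathbb{Z}\multimap X$ with compact values such that $F(x,0)=\{x\}$; $F(F(x,n),m)=F(x,n+m)$ whenever $nm\ge0$; $y\in F(x,-1)\iff x\in F(y,1)$; it is identified with its generator. A parameterized family of dmds is given by an upper semicontinuous map $F:\Lambda\times X\multimap X$ with compact values, determined by a morphism, such that for each $\lambda$, $F_\lambda(x):=F(\lambda,x)$ is (the generator of) a dmds. $\operatorname{Inv}(N,\lambda)$ is the set of $x\in N$ admitting $\sigma:\mathbb{Z}\to N$ with $\sigma(0)=x$, $\sigma(n+1)\in F_\lambda(\sigma(n))$; $N$ compact is an isolating neighborhood for $F_\lambda$ if $\operatorname{Inv}(N,\lambda)\subset\operatorname{int}N$. With $\operatorname{bd}_{F_\lambda}A:=\operatorname{cl}A\cap\operatorname{cl}(F_\lambda(A)\setminus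 A)$, a weak index pair in $N$ with respect to $F_\lambda$ is a pair of compact sets $P_2\subset P_1\subset N$ with (a) $F_\lambda(P_i)\cap N\subset P_i$, (b) $\operatorname{bd}_{F_\lambda}P_1\subset P_2$, (c) $\operatorname{Inv}(N,\lambda)\subset\operatorname{int}(P_1\setminus P_2)$, (d) $P_1\setminus P_2\subset\operatorname{int}N$. Inclusions of pairs such as $P\subset\operatorname{int}_NQ$ mean $P_i\subset\operatorname{int}_NQ_i$ for $i=1,2$. *)

theory Defs
  imports "HOL-Analysis.Analysis"
begin

definition usc_on :: "'b::topological_space set \<Rightarrow> ('b \<Rightarrow> 'c::topological_space set) \<Rightarrow> bool" where
  "usc_on S f \<longleftrightarrow> (\<forall>U. open U \<longrightarrow> openin (top_of_set S) {x\<in>S. f x \<subseteq> U})"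

definition mimage :: "('a \<Rightarrow> 'b set) \<Rightarrow> 'a set \<Rightarrow> 'b set" where
  "mimage f A = (\<Union>x\<in>A. f x)"

text \<open>Discrete multivalued dynamical system F : X x Z -o X.  Since Z is discrete,
  upper semicontinuity on X x Z means upper semicontinuity of each F(-,n).\<close>
definition dmds :: "('a::topological_space \<Rightarrow> int \<Rightarrow> 'a set) \<Rightarrow> bool" where
  "dmds F \<longleftrightarrow>
     (\<forall>n. usc_on UNIV (\<lambda>x. F x n)) \<and>
     (\<forall>x n. compact (F x n)) \<and>
     (\<forall>x. F x 0 = {x}) \<and>
     (\<forall>x n m. n * m \<ge> 0 \<longrightarrow> mimage (\<lambda>y. F y m) (F x n) = F x (n + m)) \<and>
     (\<forall>x y. y \<in> F x (-1) \<longleftrightarrow> x \<in> F y 1)"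

definition is_dmds_generator :: "('a::topological_space \<Rightarrow> 'a set) \<Rightarrow> bool" where
  "is_dmds_generator f \<longleftrightarrow> (\<exists>F. dmds F \<and> (\<forall>x. F x 1 = f x))"

text \<open>Parameterized family of dmds over the parameter set \<Lambda>
  (the requirement "determined by a morphism" is omitted).\<close>
definition param_family_dmds :: "real set \<Rightarrow> (real \<Rightarrow> 'a::topological_space \<Rightarrow> 'a set) \<Rightarrow> bool" where
  "param_family_dmds \<Lambda> F \<longleftrightarrow>
     usc_on (\<Lambda> \<times> UNIV) (\<lambda>(l, x). F l x) \<and>
     (\<forall>l\<in>\<Lambda>. \<forall>x. compact (F l x)) \<and>
     (\<forall>l\<in>\<Lambda>. is_dmds_generator (F l))"

definition Inv :: "(real \<Rightarrow> 'a \<Rightarrow> 'a set) \<Rightarrow> 'a set \<Rightarrow> real \<Rightarrow> 'a set" where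
  "Inv F N l = {x\<in>N. \<exists>\<sigma>::int \<Rightarrow> 'a. \<sigma> 0 = x \<and> (\<forall>n. \<sigma> n \<in> N \<and> \<sigma> (n + 1) \<in> F l (\<sigma> n))}"

definition isolating_nbhd :: "(real \<Rightarrow> 'a::topological_space \<Rightarrow> 'a set) \<Rightarrow> 'a set \<Rightarrow> real \<Rightarrow> bool" where
  "isolating_nbhd F N l \<longleftrightarrow> compact N \<and> Inv F N l \<subseteq> interior N"

definition bdF :: "('a::topological_space \<Rightarrow> 'a set) \<Rightarrow> 'a set \<Rightarrow> 'a set" where
  "bdF f A = closure A \<inter> closure (mimage f A - A)"

definition weak_index_pair ::
  "(real \<Rightarrow> 'a::topological_space \<Rightarrow> 'a set) \<Rightarrow> 'a set \<Rightarrow> real \<Rightarrow> 'a set \<times> 'a set \<Rightarrow> bool" where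
  "weak_index_pair F N l P \<longleftrightarrow>
     compact (fst P) \<and> compact (snd P) \<and> snd P \<subseteq> fst P \<and> fst P \<subseteq> N \<and>
     mimage (F l) (fst P) \<inter> N \<subseteq> fst P \<and> mimage (F l) (snd P) \<inter> N \<subseteq> snd P \<and>
     bdF (F l) (fst P) \<subseteq> snd P \<and>
     Inv F N l \<subseteq> interior (fst P - snd P) \<and>
     fst P - snd P \<subseteq> interior N"

definition pair_subset :: "'a set \<times> 'a set \<Rightarrow> 'a set \<times> 'a set \<Rightarrow> bool" where
  "pair_subset P Q \<longleftrightarrow> fst P \<subseteq> fst Q \<and> snd P \<subseteq> snd Q"

definition pair_subset_intN :: "'a::topological_space set \<Rightarrow> 'a set \<times> 'a set \<Rightarrow> 'a set \<times> 'a set \<Rightarrow> bool" where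
  "pair_subset_intN N P Q \<longleftrightarrow>
     fst P \<subseteq> (top_of_set N) interior_of (fst Q) \<and> snd P \<subseteq> (top_of_set N) interior_of (snd Q)"

end

theory Submission
  imports Defs "HOL-Analysis.Function_Metric"
begin


lemma CL:
  fixes S :: "nat \<Rightarrow> int \<Rightarrow> 'a::metric_space"
  assumes N: "compact N" and inN: "\<And>n j. S n j \<in> N"
  shows "\<exists>r s. strict_mono r \<and> (\<forall>j. s j \<in> N \<and> ((\<lambda>k. S (r k) j) \<longlonglongrightarrow> s j))"
proof -
  have "compactin (product_topology (\<lambda>_. euclidean) UNIV) (PiE UNIV (\<lambda>_::int. N))"
    using N by (simp add: compactin_PiE)
  hence c: "compact (PiE UNIV (\<lambda>_::int. N))"
    by (simp add: euclidean_product_topology)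
  have SN: "\<And>n. S n \<in> PiE UNIV (\<lambda>_::int. N)" using inN by auto
  have "\<exists>s\<in>PiE UNIV (\<lambda>_::int. N). \<exists>r. strict_mono r \<and> (S \<circ> r) \<longlonglongrightarrow> s"
    using compact_imp_seq_compact[OF c] SN unfolding seq_compact_def by metis
  then obtain s r where s: "s \<in> PiE UNIV (\<lambda>_::int. N)" "strict_mono r" "(S \<circ> r) \<longlonglongrightarrow> s" by blast
  have "(\<lambda>k. S (r k) j) \<longlonglongrightarrow> s j" for j
  proof -
    have "continuous_on UNIV (\<lambda>f::int\<Rightarrow>'a. f j)" by simp
    hence "isCont (\<lambda>f::int\<Rightarrow>'a. f j) s" using continuous_on_eq_continuous_at open_UNIV UNIV_I by blast
    from isCont_tendsto_compose[OF this s(3)] show ?thesis by (simp add: o_def)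
  qed
  thus ?thesis using s by (auto simp: PiE_iff)
qed

lemma seq_close:
  fixes L :: "nat \<Rightarrow> 'b::metric_space"
  assumes "\<And>n. dist (L n) m < 1 / (real n + 1)"
  shows "L \<longlonglongrightarrow> m"
proof (rule metric_LIMSEQ_I)
  fix e :: real assume "0 < e"
  then obtain M :: nat where M: "inverse (real (Suc M)) < e" using reals_Archimedean by blast
  show "\<exists>no. \<forall>n\<ge>no. dist (L n) m < e"
  proof (intro exI allI impI)
    fix n assume "M \<le> n"
    hence "real (Suc M) \<le> real n + 1" by simp
    hence "1 / (real n + 1) \<le> inverse (real (Suc M))"
      by (simp add: inverse_eq_divide frac_le)
    thus "dist (L n) m < e" using assms[of n] M by linarith
  qed
qed

definition chn :: "(real \<Rightarrow> 'a \<Rightarrow> 'a set) \<Rightarrow> 'a set \<Rightarrow> real \<Rightarrow> nat \<Rightarrow> (nat \<Rightarrow> 'a) \<Rightarrow> bool" where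
  "chn F N l k x \<longleftrightarrow> (\<forall>i\<le>k. x i \<in> N) \<and> (\<forall>i<k. x (Suc i) \<in> F l (x i))"

definition reach :: "(real \<Rightarrow> 'a \<Rightarrow> 'a set) \<Rightarrow> 'a set \<Rightarrow> real \<Rightarrow> 'a set \<Rightarrow> nat \<Rightarrow> 'a set" where
  "reach F N l C k = {y. \<exists>x. chn F N l k x \<and> x 0 \<in> C \<and> x k = y}"

definition fhull :: "(real \<Rightarrow> 'a \<Rightarrow> 'a set) \<Rightarrow> 'a set \<Rightarrow> real \<Rightarrow> 'a set \<Rightarrow> 'a set" where
  "fhull F N l C = (\<Union>k. reach F N l C k)"

lemma chn_mono: "chn F N l k x \<Longrightarrow> m \<le> k \<Longrightarrow> chn F N l m x"
  unfolding chn_def by auto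

lemma chn_shift: "chn F N l k x \<Longrightarrow> d + m \<le> k \<Longrightarrow> chn F N l m (\<lambda>i. x (i + d))"
  unfolding chn_def by auto

lemma reach_Suc: "reach F N l C (Suc k) = mimage (F l) (reach F N l C k) \<inter> N"
proof
  show "reach F N l C (Suc k) \<subseteq> mimage (F l) (reach F N l C k) \<inter> N"
  proof
    fix y assume "y \<in> reach F N l C (Suc k)"
    then obtain x where x: "chn F N l (Suc k) x" "x 0 \<in> C" "x (Suc k) = y" by (auto simp: reach_def)
    hence "x k \<in> reach F N l C k" using chn_mono[OF x(1), of k] by (auto simp: reach_def)
    moreover have "y \<in> F l (x k)" "y \<in> N" using x unfolding chn_def by auto
    ultimately show "y \<in> mimage (F l) (reach F N l C k) \<inter> N" by (auto simp: mimage_def)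
  qed
next
  show "mimage (F l) (reach F N l C k) \<inter> N \<subseteq> reach F N l C (Suc k)"
  proof
    fix y assume "y \<in> mimage (F l) (reach F N l C k) \<inter> N"
    then obtain x where x: "chn F N l k x" "x 0 \<in> C" "y \<in> F l (x k)" "y \<in> N"
      by (auto simp: mimage_def reach_def)
    have a1: "\<forall>i\<le>Suc k. (x(Suc k := y)) i \<in> N"
    proof (intro allI impI)
      fix i assume "i \<le> Suc k"
      thus "(x(Suc k := y)) i \<in> N" using x(1,4) unfolding chn_def by (cases "i = Suc k") auto
    qed
    have a2: "\<forall>i<Suc k. (x(Suc k := y)) (Suc i) \<in> F l ((x(Suc k := y)) i)"
    proof (intro allI impI)
      fix i assume "i < Suc k"
      thus "(x(Suc k := y)) (Suc i) \<in> F l ((x(Suc k := y)) i)" using x(1,3) unfolding chn_def by (cases "i = k") auto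
    qed
    have "chn F N l (Suc k) (x(Suc k := y))" using a1 a2 unfolding chn_def by blast
    thus "y \<in> reach F N l C (Suc k)" using x(2) unfolding reach_def by (intro CollectI exI[of _ "x(Suc k := y)"]) auto
  qed
qed

lemma reach_0: "reach F N l C 0 = C \<inter> N"
proof
  show "reach F N l C 0 \<subseteq> C \<inter> N" by (auto simp: reach_def chn_def)
  show "C \<inter> N \<subseteq> reach F N l C 0"
  proof
    fix y assume "y \<in> C \<inter> N"
    thus "y \<in> reach F N l C 0" unfolding reach_def chn_def by (intro CollectI exI[of _ "\<lambda>_. y"]) auto
  qed
qed

lemma fhull_inv: "mimage (F l) (fhull F N l C) \<inter> N \<subseteq> fhull F N l C"
proof
  fix y assume "y \<in> mimage (F l) (fhull F N l C) \<inter> N"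
  then obtain k z where "z \<in> reach F N l C k" "y \<in> F l z" "y \<in> N" by (auto simp: mimage_def fhull_def)
  hence "y \<in> reach F N l C (Suc k)" by (auto simp: reach_Suc mimage_def)
  thus "y \<in> fhull F N l C" by (auto simp: fhull_def)
qed

lemma fhull_sub: "C \<subseteq> N \<Longrightarrow> C \<subseteq> fhull F N l C"
  using reach_0[of F N l C] by (auto simp: fhull_def)

lemma fhull_mono_into: "C' \<subseteq> fhull F N l C \<Longrightarrow> fhull F N l C' \<subseteq> fhull F N l C"
proof -
  assume a: "C' \<subseteq> fhull F N l C"
  have "reach F N l C' k \<subseteq> fhull F N l C" for k
  proof (induction k)
    case 0 then show ?case using a by (simp add: reach_0) blast
  next
    case (Suc k)
    hence "reach F N l C' (Suc k) \<subseteq> mimage (F l) (fhull F N l C) \<inter> N"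
      by (auto simp: reach_Suc mimage_def)
    thus ?case using fhull_inv[of F l N C] by blast
  qed
  thus ?thesis by (auto simp: fhull_def)
qed

lemma fhull_subN: "fhull F N l C \<subseteq> N"
  by (auto simp: fhull_def reach_def chn_def)




locale fam =
  fixes F :: "real \<Rightarrow> 'a::metric_space \<Rightarrow> 'a set" and Lam :: "real set" and N :: "'a set"
  assumes usc: "usc_on (Lam \<times> UNIV) (\<lambda>(l, x). F l x)"
    and cpt: "\<forall>l\<in>Lam. \<forall>x. compact (F l x)"
    and cN: "compact N"
begin

lemma CG:
  assumes L: "\<And>n. L n \<in> Lam" and l: "l \<in> Lam" and tL: "L \<longlonglongrightarrow> l"
    and tX: "X \<longlonglongrightarrow> x" and tY: "Y \<longlonglongrightarrow> y"
    and ev: "eventually (\<lambda>n. Y n \<in> F (L n) (X n)) sequentially"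
  shows "y \<in> F l x"
proof (rule ccontr)
  assume ny: "y \<notin> F l x"
  have "closed (F l x)" using cpt l by (simp add: compact_imp_closed)
  then obtain e where e: "e > 0" "ball y e \<subseteq> - F l x"
    using ny open_contains_ball[of "- F l x"] by (auto simp: open_Compl)
  define U where "U = - cball y (e/2)"
  have oU: "open U" unfolding U_def by auto
  have sub: "F l x \<subseteq> U" using e unfolding U_def by (auto simp: subset_eq dist_commute)
  have "openin (top_of_set (Lam \<times> UNIV)) {p \<in> Lam \<times> UNIV. (\<lambda>(l, x). F l x) p \<subseteq> U}"
    using usc oU unfolding usc_on_def by blast
  then obtain T where T: "open T" "{p \<in> Lam \<times> UNIV. (\<lambda>(l, x). F l x) p \<subseteq> U} = (Lam \<times> UNIV) \<inter> T"
    by (auto simp: openin_open)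
  have "(l, x) \<in> T" using T(2) l sub by blast
  moreover have "((\<lambda>n. (L n, X n)) \<longlonglongrightarrow> (l, x))" using tL tX by (rule tendsto_Pair)
  ultimately have "eventually (\<lambda>n. (L n, X n) \<in> T) sequentially"
    using T(1) topological_tendstoD by blast
  hence evU: "eventually (\<lambda>n. F (L n) (X n) \<subseteq> U) sequentially"
    by eventually_elim (use T(2) L in blast)
  have "eventually (\<lambda>n. dist (Y n) y < e/2) sequentially"
    using tendstoD[OF tY, of "e/2"] e(1) by simp
  hence evB: "eventually (\<lambda>n. Y n \<in> ball y (e/2)) sequentially"
    by (simp add: dist_commute)
  have "eventually (\<lambda>n. False) sequentially"
    using evU evB ev by eventually_elim (auto simp: U_def)
  thus False by simp
qed

lemma reach_compact:
  assumes l: "l \<in> Lam" and C: "closed C"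
  shows "compact (reach F N l C k)"
proof -
  have "seq_compact (reach F N l C k)"
    unfolding seq_compact_def
  proof (intro allI impI)
    fix f :: "nat \<Rightarrow> 'a" assume f: "\<forall>n. f n \<in> reach F N l C k"
    hence "\<forall>n. \<exists>x. chn F N l k x \<and> x 0 \<in> C \<and> x k = f n"
      unfolding reach_def by blast
    then obtain X where X0: "\<forall>n. chn F N l k (X n) \<and> X n 0 \<in> C \<and> X n k = f n"
      by (rule choice[THEN exE])
    hence X: "\<And>n. chn F N l k (X n) \<and> X n 0 \<in> C \<and> X n k = f n" by blast
    define S where "S n j = X n (min k (nat j))" for n :: nat and j :: int
    have SN: "S n j \<in> N" for n j
    proof -
      have "\<forall>i\<le>k. X n i \<in> N" using X[of n] unfolding chn_def by blast
      moreover have "min k (nat j) \<le> k" by (rule min.cobounded1)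
      ultimately show ?thesis unfolding S_def by blast
    qed
    have "\<exists>r s. strict_mono r \<and> (\<forall>j. s j \<in> N \<and> ((\<lambda>k. S (r k) j) \<longlonglongrightarrow> s j))"
      by (rule CL[OF cN]) (rule SN)
    then obtain r s where rs0: "strict_mono r" "\<forall>j. s j \<in> N \<and> ((\<lambda>k. S (r k) j) \<longlonglongrightarrow> s j)"
      by blast
    have rs: "strict_mono r" "\<And>j. s j \<in> N" "\<And>j. (\<lambda>n. S (r n) j) \<longlonglongrightarrow> s j"
      using rs0 by auto
    define x where "x i = s (int i)" for i
    have xlim: "(\<lambda>n. X (r n) i) \<longlonglongrightarrow> x i" if "i \<le> k" for i
      using rs(3)[of "int i"] that unfolding S_def x_def by simp
    have "chn F N l k x"
      unfolding chn_def
    proof (intro conjI allI impI)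
      fix i assume "i \<le> k" thus "x i \<in> N" using rs(2) by (simp add: x_def)
    next
      fix i assume i: "i < k"
      have ev: "\<forall>n. X (r n) (Suc i) \<in> F l (X (r n) i)" using X i unfolding chn_def by blast
      show "x (Suc i) \<in> F l (x i)"
        by (rule CG[of "\<lambda>_. l" l "\<lambda>n. X (r n) i" "x i" "\<lambda>n. X (r n) (Suc i)" "x (Suc i)"])
           (simp_all add: l xlim i ev less_imp_le Suc_leI)
    qed
    moreover have "x 0 \<in> C"
      using closed_sequentially[OF C, of "\<lambda>n. X (r n) 0"] X xlim[of 0] by auto
    ultimately have "x k \<in> reach F N l C k" unfolding reach_def by blast
    moreover have "(f \<circ> r) \<longlonglongrightarrow> x k" using xlim[of k] X by (simp add: o_def)
    ultimately show "\<exists>l\<in>reach F N l C k. \<exists>r. strict_mono r \<and> (f \<circ> r) \<longlonglongrightarrow> l"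
      using rs(1) by blast
  qed
  thus ?thesis by (simp add: compact_eq_seq_compact_metric)
qed


lemma S1:
  assumes mu: "\<mu> \<in> Lam" and A: "closed A" and inv: "mimage (F \<mu>) A \<inter> N \<subseteq> A"
    and T: "open T" "A \<subseteq> T"
  shows "\<exists>d>0. \<forall>l\<in>Lam. dist l \<mu> < d \<longrightarrow> (\<forall>x. chn F N l k x \<longrightarrow> x 0 \<in> A \<longrightarrow> x k \<in> T)"
proof (rule ccontr)
  assume na: "\<not> ?thesis"
  have "\<forall>n::nat. \<exists>l. l \<in> Lam \<and> dist l \<mu> < 1 / (real n + 1) \<and> (\<exists>x. chn F N l k x \<and> x 0 \<in> A \<and> x k \<notin> T)"
  proof
    fix n :: nat
    have "1 / (real n + 1) > 0" by simp
    thus "\<exists>l. l \<in> Lam \<and> dist l \<mu> < 1 / (real n + 1) \<and> (\<exists>x. chn F N l k x \<and> x 0 \<in> A \<and> x k \<notin> T)"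
      using na by blast
  qed
  then obtain L where L: "\<forall>n. L n \<in> Lam \<and> dist (L n) \<mu> < 1 / (real n + 1) \<and> (\<exists>x. chn F N (L n) k x \<and> x 0 \<in> A \<and> x k \<notin> T)"
    by (rule choice[THEN exE])
  hence "\<forall>n. \<exists>x. chn F N (L n) k x \<and> x 0 \<in> A \<and> x k \<notin> T" by blast
  then obtain X where X0: "\<forall>n. chn F N (L n) k (X n) \<and> X n 0 \<in> A \<and> X n k \<notin> T"
    by (rule choice[THEN exE])
  hence X: "\<And>n. chn F N (L n) k (X n) \<and> X n 0 \<in> A \<and> X n k \<notin> T" by blast
  have Lin: "\<And>n. L n \<in> Lam" using L by blast
  have Lt: "L \<longlonglongrightarrow> \<mu>" by (rule seq_close) (use L in blast)
  define S where "S n j = X n (min k (nat j))" for n :: nat and j :: int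
  have SN: "S n j \<in> N" for n j
  proof -
    have "\<forall>i\<le>k. X n i \<in> N" using X[of n] unfolding chn_def by blast
    moreover have "min k (nat j) \<le> k" by (rule min.cobounded1)
    ultimately show ?thesis unfolding S_def by blast
  qed
  have "\<exists>r s. strict_mono r \<and> (\<forall>j. s j \<in> N \<and> ((\<lambda>k. S (r k) j) \<longlonglongrightarrow> s j))"
    by (rule CL[OF cN]) (rule SN)
  then obtain r s where rs0: "strict_mono r" "\<forall>j. s j \<in> N \<and> ((\<lambda>k. S (r k) j) \<longlonglongrightarrow> s j)"
    by blast
  have rs: "strict_mono r" "\<And>j. s j \<in> N" "\<And>j. (\<lambda>n. S (r n) j) \<longlonglongrightarrow> s j"
    using rs0 by auto
  have Lrt: "(\<lambda>n. L (r n)) \<longlonglongrightarrow> \<mu>" using LIMSEQ_subseq_LIMSEQ[OF Lt rs(1)] by (simp add: o_def)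
  define x where "x i = s (int i)" for i
  have xlim: "(\<lambda>n. X (r n) i) \<longlonglongrightarrow> x i" if "i \<le> k" for i
    using rs(3)[of "int i"] that unfolding S_def x_def by simp
  have xN: "x i \<in> N" for i using rs(2) by (simp add: x_def)
  have step: "x (Suc i) \<in> F \<mu> (x i)" if i: "i < k" for i
  proof -
    have ev: "\<forall>n. X (r n) (Suc i) \<in> F (L (r n)) (X (r n) i)" using X i unfolding chn_def by blast
    show ?thesis
      by (rule CG[of "\<lambda>n. L (r n)" \<mu> "\<lambda>n. X (r n) i" "x i" "\<lambda>n. X (r n) (Suc i)" "x (Suc i)"])
         (simp_all add: Lin mu Lrt xlim i ev less_imp_le Suc_leI)
  qed
  have x0: "x 0 \<in> A"
    using closed_sequentially[OF A, of "\<lambda>n. X (r n) 0"] X xlim[of 0] by auto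
  have xA: "i \<le> k \<Longrightarrow> x i \<in> A" for i
  proof (induction i)
    case 0 show ?case by (rule x0)
  next
    case (Suc i)
    hence "x i \<in> A" "i < k" by auto
    hence "x (Suc i) \<in> mimage (F \<mu>) A \<inter> N" using step[of i] xN[of "Suc i"] by (auto simp: mimage_def)
    thus ?case using inv by blast
  qed
  have "x k \<in> T" using xA[of k] T(2) by blast
  hence "eventually (\<lambda>n. X (r n) k \<in> T) sequentially"
    using topological_tendstoD[OF xlim[of k] T(1)] by simp
  moreover have "\<forall>n. X (r n) k \<notin> T" using X by blast
  ultimately have "eventually (\<lambda>n. False) sequentially" by (simp add: eventually_mono)
  thus False by simp
qed

lemma S1all:
  assumes mu: "\<mu> \<in> Lam" and A: "closed A" and inv: "mimage (F \<mu>) A \<inter> N \<subseteq> A"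
    and T: "open T" "A \<subseteq> T"
  shows "\<exists>d>0. \<forall>l\<in>Lam. dist l \<mu> < d \<longrightarrow> (\<forall>k\<le>K. \<forall>x. chn F N l k x \<longrightarrow> x 0 \<in> A \<longrightarrow> x k \<in> T)"
proof (induction K)
  case 0
  obtain d where "d > 0" "\<forall>l\<in>Lam. dist l \<mu> < d \<longrightarrow> (\<forall>x. chn F N l 0 x \<longrightarrow> x 0 \<in> A \<longrightarrow> x 0 \<in> T)"
    using S1[OF mu A inv T, of 0] by blast
  thus ?case by auto
next
  case (Suc K)
  then obtain d1 where d1: "d1 > 0" "\<forall>l\<in>Lam. dist l \<mu> < d1 \<longrightarrow> (\<forall>k\<le>K. \<forall>x. chn F N l k x \<longrightarrow> x 0 \<in> A \<longrightarrow> x k \<in> T)"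
    by blast
  obtain d2 where d2: "d2 > 0" "\<forall>l\<in>Lam. dist l \<mu> < d2 \<longrightarrow> (\<forall>x. chn F N l (Suc K) x \<longrightarrow> x 0 \<in> A \<longrightarrow> x (Suc K) \<in> T)"
    using S1[OF mu A inv T, of "Suc K"] by blast
  show ?case
  proof (intro exI[of _ "min d1 d2"] conjI ballI impI allI)
    show "min d1 d2 > 0" using d1 d2 by simp
  next
    fix l k x assume l: "l \<in> Lam" "dist l \<mu> < min d1 d2" and k: "k \<le> Suc K" and c: "chn F N l k x" "x 0 \<in> A"
    show "x k \<in> T"
    proof (cases "k = Suc K")
      case True thus ?thesis using d2 l c by auto
    next
      case False hence "k \<le> K" using k by simp
      thus ?thesis using d1 l c by auto
    qed
  qed
qed

lemma S2:
  assumes mu: "\<mu> \<in> Lam" and V: "open V" "Inv F N \<mu> \<subseteq> V"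
  shows "\<exists>K. \<exists>d>0. \<forall>l\<in>Lam. dist l \<mu> < d \<longrightarrow> (\<forall>x. chn F N l (2*K) x \<longrightarrow> x K \<in> V)"
proof (rule ccontr)
  assume na: "\<not> ?thesis"
  have "\<forall>n::nat. \<exists>l. l \<in> Lam \<and> dist l \<mu> < 1 / (real n + 1) \<and> (\<exists>x. chn F N l (2*n) x \<and> x n \<notin> V)"
  proof
    fix n :: nat
    have "1 / (real n + 1) > 0" by simp
    thus "\<exists>l. l \<in> Lam \<and> dist l \<mu> < 1 / (real n + 1) \<and> (\<exists>x. chn F N l (2*n) x \<and> x n \<notin> V)"
      using na by blast
  qed
  then obtain L where L: "\<forall>n. L n \<in> Lam \<and> dist (L n) \<mu> < 1 / (real n + 1) \<and> (\<exists>x. chn F N (L n) (2*n) x \<and> x n \<notin> V)"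
    by (rule choice[THEN exE])
  hence "\<forall>n. \<exists>x. chn F N (L n) (2*n) x \<and> x n \<notin> V" by blast
  then obtain X where X0: "\<forall>n. chn F N (L n) (2*n) (X n) \<and> X n n \<notin> V"
    by (rule choice[THEN exE])
  hence X: "\<And>n. chn F N (L n) (2*n) (X n) \<and> X n n \<notin> V" by blast
  have Lin: "\<And>n. L n \<in> Lam" using L by blast
  have Lt: "L \<longlonglongrightarrow> \<mu>" by (rule seq_close) (use L in blast)
  define S where "S n j = X n (nat (min (2 * int n) (int n + j)))" for n :: nat and j :: int
  have SN: "S n j \<in> N" for n j
  proof -
    have "\<forall>i\<le>2*n. X n i \<in> N" using X[of n] unfolding chn_def by blast
    moreover have "nat (min (2 * int n) (int n + j)) \<le> 2 * n" by linarith
    ultimately show ?thesis unfolding S_def by blast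
  qed
  have "\<exists>r s. strict_mono r \<and> (\<forall>j. s j \<in> N \<and> ((\<lambda>k. S (r k) j) \<longlonglongrightarrow> s j))"
    by (rule CL[OF cN]) (rule SN)
  then obtain r s where rs0: "strict_mono r" "\<forall>j. s j \<in> N \<and> ((\<lambda>k. S (r k) j) \<longlonglongrightarrow> s j)"
    by blast
  have rs: "strict_mono r" "\<And>j. s j \<in> N" "\<And>j. (\<lambda>n. S (r n) j) \<longlonglongrightarrow> s j"
    using rs0 by auto
  have Lrt: "(\<lambda>n. L (r n)) \<longlonglongrightarrow> \<mu>" using LIMSEQ_subseq_LIMSEQ[OF Lt rs(1)] by (simp add: o_def)
  have step: "s (j + 1) \<in> F \<mu> (s j)" for j
  proof -
    have ev: "eventually (\<lambda>k. S (r k) (j + 1) \<in> F (L (r k)) (S (r k) j)) sequentially"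
      unfolding eventually_sequentially
    proof (intro exI[of _ "nat \<bar>j\<bar> + 1"] allI impI)
      fix k assume k: "nat \<bar>j\<bar> + 1 \<le> k"
      define n where "n = r k"
      have "k \<le> r k" using seq_suble[OF rs(1)] by blast
      hence nk: "int n \<ge> \<bar>j\<bar> + 1" using k unfolding n_def by linarith
      define i where "i = nat (int n + j)"
      have "int n + j \<le> 2 * int n" using nk by linarith
      hence m1: "min (2 * int n) (int n + j) = int n + j" by (rule min_absorb2)
      have "int n + (j + 1) \<le> 2 * int n" using nk by linarith
      hence m2: "min (2 * int n) (int n + (j + 1)) = int n + (j + 1)" by (rule min_absorb2)
      have nn: "0 \<le> int n + j" using nk by linarith
      have "int (Suc (nat (int n + j))) = int n + (j + 1)" using nn by simp
      hence m3: "nat (int n + (j + 1)) = Suc i" unfolding i_def by (metis nat_int)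
      have e1: "S n j = X n i" unfolding S_def i_def m1 by (rule refl)
      have e2: "S n (j + 1) = X n (Suc i)" unfolding S_def m2 m3 by (rule refl)
      have "i < 2 * n" unfolding i_def using nk by linarith
      hence "X n (Suc i) \<in> F (L n) (X n i)" using X[of n] unfolding chn_def by blast
      thus "S (r k) (j + 1) \<in> F (L (r k)) (S (r k) j)" using e1 e2 unfolding n_def by simp
    qed
    show ?thesis
      by (rule CG[of "\<lambda>n. L (r n)" \<mu> "\<lambda>n. S (r n) j" "s j" "\<lambda>n. S (r n) (j+1)" "s (j+1)"])
         (simp_all add: Lin mu Lrt rs(3) ev)
  qed
  have "s 0 \<in> Inv F N \<mu>"
    unfolding Inv_def using rs(2) step by blast
  hence sV: "s 0 \<in> V" using V by blast
  have "S n 0 = X n n" for n unfolding S_def by simp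
  hence "\<forall>n. S (r n) 0 \<in> - V" using X by simp
  hence "s 0 \<in> - V"
    using closed_sequentially[of "- V" "\<lambda>n. S (r n) 0" "s 0"] V(1) rs(3)[of 0] by auto
  thus False using sV by simp
qed
end



context fam begin

lemma construct:
  fixes P1 P2 Q1 Q2 R1 R2 V T1 T2 :: "'a set" and K :: nat and l :: real
  assumes l: "l \<in> Lam"
    and cP1: "compact P1" and cQ2: "compact Q2"
    and P21: "P2 \<subseteq> P1" and P1N: "P1 \<subseteq> N"
    and P2Q2: "P2 \<subseteq> Q2" and Q1R1: "Q1 \<subseteq> R1"
    and Q12: "Q1 - Q2 \<subseteq> interior N"
    and T1: "N \<inter> T1 \<subseteq> Q1" and T2: "N \<inter> T2 \<subseteq> R2"
    and oV: "open V" and VP: "V \<subseteq> P1" and VR: "V \<inter> R2 = {}"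
    and A1: "\<forall>k\<le>2*K. \<forall>x. chn F N l k x \<longrightarrow> x 0 \<in> P1 \<longrightarrow> x k \<in> T1"
    and A2: "\<forall>x. chn F N l (2*K) x \<longrightarrow> x K \<in> V"
    and A3: "\<forall>k\<le>2*K. \<forall>x. chn F N l k x \<longrightarrow> x 0 \<in> Q2 \<longrightarrow> x k \<in> T2"
  shows "\<exists>Pl. weak_index_pair F N l Pl \<and> pair_subset (P1, P2) Pl \<and> pair_subset Pl (R1, R2)"
proof -
  define H1 where "H1 = fhull F N l P1"
  define H2 where "H2 = fhull F N l (Q2 \<inter> H1)"
  have C1: "\<exists>k\<le>2*K. y \<in> reach F N l P1 k" if "y \<in> H1" for y
  proof -
    from that obtain k x where kx: "chn F N l k x" "x 0 \<in> P1" "x k = y"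
      unfolding H1_def fhull_def reach_def by blast
    show ?thesis
    proof (cases "k \<le> 2*K")
      case True thus ?thesis using kx unfolding reach_def by blast
    next
      case False
      have c1: "chn F N l (2*K) (\<lambda>i. x (i + (k - 2*K)))"
        by (rule chn_shift[OF kx(1)]) (use False in simp)
      have e1: "K + (k - 2*K) = k - K" using False by simp
      have "x (k - K) \<in> V" using A2 c1 e1 by fastforce
      hence xP: "x (k - K) \<in> P1" using VP by blast
      have c2: "chn F N l K (\<lambda>i. x (i + (k - K)))"
        by (rule chn_shift[OF kx(1)]) (use False in simp)
      have e2: "K + (k - K) = k" using False by simp
      have "y \<in> reach F N l P1 K" unfolding reach_def
        using c2 xP e2 kx(3) by (intro CollectI exI[of _ "\<lambda>i. x (i + (k - K))"]) simp
      moreover have "K \<le> 2*K" by simp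
      ultimately show ?thesis by blast
    qed
  qed
  have H1Q1: "H1 \<subseteq> Q1"
  proof
    fix y assume "y \<in> H1"
    then obtain k where k: "k \<le> 2*K" "y \<in> reach F N l P1 k" using C1 by blast
    then obtain x where x: "chn F N l k x" "x 0 \<in> P1" "x k = y" unfolding reach_def by blast
    have "y \<in> T1" using A1 k(1) x by blast
    moreover have "y \<in> N" using x unfolding chn_def by auto
    ultimately show "y \<in> Q1" using T1 by blast
  qed
  have C3: "k < 2*K" if "chn F N l k x" "x 0 \<in> Q2" for k x
  proof (rule ccontr)
    assume "\<not> k < 2*K"
    hence "chn F N l (2*K) x" "chn F N l K x" using chn_mono[OF that(1)] by auto
    hence "x K \<in> V" "x K \<in> T2" "x K \<in> N" using A2 A3 that(2) unfolding chn_def by auto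
    thus False using T2 VR by blast
  qed
  have H2R2: "H2 \<subseteq> R2"
  proof
    fix y assume "y \<in> H2"
    then obtain k x where x: "chn F N l k x" "x 0 \<in> Q2 \<inter> H1" "x k = y"
      unfolding H2_def fhull_def reach_def by blast
    have "k \<le> 2*K" using C3[OF x(1)] x(2) by auto
    hence "y \<in> T2" using A3 x by blast
    moreover have "y \<in> N" using x unfolding chn_def by auto
    ultimately show "y \<in> R2" using T2 by blast
  qed
  have H1eq: "H1 = (\<Union>k\<in>{..2*K}. reach F N l P1 k)"
    using C1 unfolding H1_def fhull_def by auto
  have cH1: "compact H1" unfolding H1eq
    by (rule compact_UN) (auto intro: reach_compact[OF l] compact_imp_closed[OF cP1])
  have cQH: "closed (Q2 \<inter> H1)" using cQ2 cH1 by (simp add: closed_Int compact_imp_closed)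
  have H2eq: "H2 = (\<Union>k\<in>{..<2*K}. reach F N l (Q2 \<inter> H1) k)"
  proof
    show "H2 \<subseteq> (\<Union>k\<in>{..<2*K}. reach F N l (Q2 \<inter> H1) k)"
    proof
      fix y assume "y \<in> H2"
      then obtain k x where x: "chn F N l k x" "x 0 \<in> Q2 \<inter> H1" "x k = y"
        unfolding H2_def fhull_def reach_def by blast
      have "k < 2*K" using C3[OF x(1)] x(2) by auto
      thus "y \<in> (\<Union>k\<in>{..<2*K}. reach F N l (Q2 \<inter> H1) k)" using x unfolding reach_def by blast
    qed
    show "(\<Union>k\<in>{..<2*K}. reach F N l (Q2 \<inter> H1) k) \<subseteq> H2" unfolding H2_def fhull_def by auto
  qed
  have cH2: "compact H2" unfolding H2eq
    by (rule compact_UN) (auto intro: reach_compact[OF l cQH])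
  have H1N: "H1 \<subseteq> N" unfolding H1_def by (rule fhull_subN)
  have P1H1: "P1 \<subseteq> H1" unfolding H1_def by (rule fhull_sub[OF P1N])
  have QHsub: "Q2 \<inter> H1 \<subseteq> H2" unfolding H2_def by (rule fhull_sub) (use H1N in blast)
  have H21: "H2 \<subseteq> H1" unfolding H2_def H1_def by (rule fhull_mono_into) (simp add: H1_def)
  have K0: "z \<in> H2" if "z \<in> H1" "z \<notin> interior N" for z
  proof -
    have "z \<in> Q1" using H1Q1 that(1) by blast
    hence "z \<in> Q2" using Q12 that(2) by blast
    thus ?thesis using QHsub that(1) by blast
  qed
  have invH1: "mimage (F l) H1 \<inter> N \<subseteq> H1" unfolding H1_def by (rule fhull_inv)
  have invH2: "mimage (F l) H2 \<inter> N \<subseteq> H2" unfolding H2_def by (rule fhull_inv)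
  have bd: "bdF (F l) H1 \<subseteq> H2"
  proof
    fix z assume z: "z \<in> bdF (F l) H1"
    have "z \<in> H1" using z cH1 unfolding bdF_def by (simp add: compact_imp_closed closure_closed)
    moreover have "mimage (F l) H1 - H1 \<subseteq> - N" using invH1 by blast
    hence "closure (mimage (F l) H1 - H1) \<subseteq> - interior N"
      using closure_mono[of "mimage (F l) H1 - H1" "- N"] by (simp add: closure_complement)
    hence "z \<notin> interior N" using z unfolding bdF_def by blast
    ultimately show "z \<in> H2" by (rule K0)
  qed
  have InvV: "Inv F N l \<subseteq> V"
  proof
    fix y assume "y \<in> Inv F N l"
    then obtain \<sigma> :: "int \<Rightarrow> 'a" where \<sigma>: "\<sigma> 0 = y" "\<forall>n. \<sigma> n \<in> N \<and> \<sigma> (n + 1) \<in> F l (\<sigma> n)"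
      unfolding Inv_def by blast
    define x where "x i = \<sigma> (int i - int K)" for i
    have "chn F N l (2*K) x" unfolding chn_def
    proof (intro conjI allI impI)
      fix i show "x i \<in> N" using \<sigma>(2) unfolding x_def by blast
    next
      fix i
      have "int (Suc i) - int K = (int i - int K) + 1" by simp
      thus "x (Suc i) \<in> F l (x i)" using \<sigma>(2) unfolding x_def by metis
    qed
    hence "x K \<in> V" using A2 by blast
    thus "y \<in> V" using \<sigma>(1) unfolding x_def by simp
  qed
  have VH: "V \<subseteq> H1 - H2" using VP P1H1 H2R2 VR by blast
  have intV: "Inv F N l \<subseteq> interior (H1 - H2)"
    using InvV interior_maximal[OF VH oV] by blast
  have dN: "H1 - H2 \<subseteq> interior N" using K0 by blast
  have wip: "weak_index_pair F N l (H1, H2)"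
    unfolding weak_index_pair_def fst_conv snd_conv
    using cH1 cH2 H21 H1N invH1 invH2 bd intV dN by blast
  have "P2 \<subseteq> H2" using P2Q2 P21 P1H1 QHsub by blast
  hence ps1: "pair_subset (P1, P2) (H1, H2)" using P1H1 unfolding pair_subset_def by simp
  have ps2: "pair_subset (H1, H2) (R1, R2)" using H1Q1 Q1R1 H2R2 unfolding pair_subset_def by auto
  show ?thesis using wip ps1 ps2 by blast
qed

end



theorem mainTheorem7:
  fixes F :: "real \<Rightarrow> 'a::metric_space \<Rightarrow> 'a set"
    and a b \<mu> :: real and N :: "'a set" and P Q R :: "'a set \<times> 'a set"
  assumes "locally compact (UNIV :: 'a set)"
    and "a \<le> b"
    and "param_family_dmds {a..b} F"
    and "\<mu> \<in> {a..b}"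
    and "isolating_nbhd F N \<mu>"
    and "weak_index_pair F N \<mu> P"
    and "weak_index_pair F N \<mu> Q"
    and "weak_index_pair F N \<mu> R"
    and "pair_subset_intN N P Q"
    and "pair_subset_intN N Q R"
  shows "\<exists>\<Lambda>0. openin (top_of_set {a..b}) \<Lambda>0 \<and> \<mu> \<in> \<Lambda>0 \<and>
           (\<forall>l\<in>\<Lambda>0. \<exists>Pl. weak_index_pair F N l Pl \<and> pair_subset P Pl \<and> pair_subset Pl R)"
proof -
  obtain P1 P2 where P: "P = (P1, P2)" by (cases P)
  obtain Q1 Q2 where Q: "Q = (Q1, Q2)" by (cases Q)
  obtain R1 R2 where R: "R = (R1, R2)" by (cases R)
  have fam: "fam F {a..b} N"
    using assms(3,5) unfolding fam_def param_family_dmds_def isolating_nbhd_def by blast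
  interpret fam F "{a..b}" N by (rule fam)
  have mu: "\<mu> \<in> {a..b}" by (rule assms(4))
  have wP: "compact P1" "compact P2" "P2 \<subseteq> P1" "P1 \<subseteq> N" "mimage (F \<mu>) P1 \<inter> N \<subseteq> P1"
     "Inv F N \<mu> \<subseteq> interior (P1 - P2)"
    using assms(6) unfolding P weak_index_pair_def by auto
  have wQ: "compact Q2" "mimage (F \<mu>) Q2 \<inter> N \<subseteq> Q2" "Q1 - Q2 \<subseteq> interior N"
    using assms(7) unfolding Q weak_index_pair_def by auto
  have wR: "compact R2" "Inv F N \<mu> \<subseteq> interior (R1 - R2)"
    using assms(8) unfolding R weak_index_pair_def by auto
  have iPQ: "P1 \<subseteq> (top_of_set N) interior_of Q1" "P2 \<subseteq> (top_of_set N) interior_of Q2"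
    using assms(9) unfolding P Q pair_subset_intN_def by auto
  have iQR: "Q1 \<subseteq> (top_of_set N) interior_of R1" "Q2 \<subseteq> (top_of_set N) interior_of R2"
    using assms(10) unfolding Q R pair_subset_intN_def by auto
  obtain T1 where T1: "open T1" "(top_of_set N) interior_of Q1 = N \<inter> T1"
    using openin_interior_of[of "top_of_set N" Q1] unfolding openin_open by blast
  obtain T2 where T2: "open T2" "(top_of_set N) interior_of R2 = N \<inter> T2"
    using openin_interior_of[of "top_of_set N" R2] unfolding openin_open by blast
  have T1Q: "N \<inter> T1 \<subseteq> Q1" using T1(2) interior_of_subset[of "top_of_set N" Q1] by blast
  have T2R: "N \<inter> T2 \<subseteq> R2" using T2(2) interior_of_subset[of "top_of_set N" R2] by blast
  have P2Q2: "P2 \<subseteq> Q2" using iPQ(2) interior_of_subset[of "top_of_set N" Q2] by blast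
  have Q1R1: "Q1 \<subseteq> R1" using iQR(1) interior_of_subset[of "top_of_set N" R1] by blast
  define V where "V = interior (P1 - P2) \<inter> - R2"
  have oV: "open V" unfolding V_def using wR(1) by (simp add: open_Int open_Compl compact_imp_closed)
  have VP: "V \<subseteq> P1" unfolding V_def using interior_subset[of "P1 - P2"] by blast
  have VR: "V \<inter> R2 = {}" unfolding V_def by blast
  have InvV: "Inv F N \<mu> \<subseteq> V" unfolding V_def using wP(6) wR(2) interior_subset[of "R1 - R2"] by blast
  obtain K d2 where d2: "d2 > 0" "\<forall>l\<in>{a..b}. dist l \<mu> < d2 \<longrightarrow> (\<forall>x. chn F N l (2*K) x \<longrightarrow> x K \<in> V)"
    using S2[OF mu oV InvV] by blast
  obtain d1 where d1: "d1 > 0" "\<forall>l\<in>{a..b}. dist l \<mu> < d1 \<longrightarrow> (\<forall>k\<le>2*K. \<forall>x. chn F N l k x \<longrightarrow> x 0 \<in> P1 \<longrightarrow> x k \<in> T1)"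
    using S1all[OF mu compact_imp_closed[OF wP(1)] wP(5) T1(1), of "2*K"] iPQ(1) T1(2) by blast
  obtain d3 where d3: "d3 > 0" "\<forall>l\<in>{a..b}. dist l \<mu> < d3 \<longrightarrow> (\<forall>k\<le>2*K. \<forall>x. chn F N l k x \<longrightarrow> x 0 \<in> Q2 \<longrightarrow> x k \<in> T2)"
    using S1all[OF mu compact_imp_closed[OF wQ(1)] wQ(2) T2(1), of "2*K"] iQR(2) T2(2) by blast
  define d where "d = min d1 (min d2 d3)"
  have dpos: "d > 0" unfolding d_def using d1 d2 d3 by simp
  show ?thesis
  proof (intro exI[of _ "{a..b} \<inter> ball \<mu> d"] conjI ballI)
    show "openin (top_of_set {a..b}) ({a..b} \<inter> ball \<mu> d)" by (rule openin_open_Int) simp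
    show "\<mu> \<in> {a..b} \<inter> ball \<mu> d" using mu dpos by simp
  next
    fix l assume l: "l \<in> {a..b} \<inter> ball \<mu> d"
    hence lL: "l \<in> {a..b}" and dl: "dist l \<mu> < d" by (auto simp: dist_commute)
    have A1: "\<forall>k\<le>2*K. \<forall>x. chn F N l k x \<longrightarrow> x 0 \<in> P1 \<longrightarrow> x k \<in> T1"
      using d1(2) lL dl unfolding d_def by simp
    have A2: "\<forall>x. chn F N l (2*K) x \<longrightarrow> x K \<in> V"
      using d2(2) lL dl unfolding d_def by simp
    have A3: "\<forall>k\<le>2*K. \<forall>x. chn F N l k x \<longrightarrow> x 0 \<in> Q2 \<longrightarrow> x k \<in> T2"
      using d3(2) lL dl unfolding d_def by simp
    have "\<exists>Pl. weak_index_pair F N l Pl \<and> pair_subset (P1, P2) Pl \<and> pair_subset Pl (R1, R2)"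
      by (rule construct[OF lL wP(1) wQ(1) wP(3) wP(4) P2Q2 Q1R1 wQ(3) T1Q T2R oV VP VR A1 A2 A3])
    thus "\<exists>Pl. weak_index_pair F N l Pl \<and> pair_subset P Pl \<and> pair_subset Pl R" unfolding P R .
  qed
qed


end
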